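(* Let $G$ be a group, $F$ a field of characteristic $0$, and let $R=M_n(F)$ carry the elementary $G$-grading induced by an $n$-tuple $(g_1,\dots,g_n)$ of pairwise distinct elements of $G$. For $h\in\mathrm{supp}(R)$ put $M_h=\sum_{g_k^{-1}g_l=h}e_{kl}$. Let $h_1,\dots,h_k\in\mathrm{supp}(R)$ with $h_1h_2\cdots h_k=1_G$. Then the matrices $M_{h_1}M_{h_2}\cdots M_{h_k}$ and $M_{h_2}\cdots M_{h_k}$ have the same number of nonzero rows.
   Context: The elementary $G$-grading on $M_n(F)$ induced by $(g_1,\dots,g_n)\in G^n$ is $R=\bigoplus_{g\in G}R_g$ with $R_g=\mathrm{span}\{e_{pq}: g_p^{-1}g_q=g\}$, where $e_{pq}$ are the matrix units. The support is $\mathrm{supp}(R)=\{g\in G: R_g\neq 0\}$. *)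

theory Defs
  imports "HOL-Algebra.Group" "Jordan_Normal_Form.Matrix"
begin

definition elem_supp :: "('g, 'b) monoid_scheme \<Rightarrow> nat \<Rightarrow> (nat \<Rightarrow> 'g) \<Rightarrow> 'g set" where
  "elem_supp G n g = {h. \<exists>p<n. \<exists>q<n. inv\<^bsub>G\<^esub> (g p) \<otimes>\<^bsub>G\<^esub> g q = h}"

definition grade_mat :: "('g, 'b) monoid_scheme \<Rightarrow> nat \<Rightarrow> (nat \<Rightarrow> 'g) \<Rightarrow> 'g \<Rightarrow> 'a::field mat" where
  "grade_mat G n g h = mat n n (\<lambda>(p, q). if inv\<^bsub>G\<^esub> (g p) \<otimes>\<^bsub>G\<^esub> g q = h then 1 else 0)"

definition mat_list_prod :: "nat \<Rightarrow> 'a::field mat list \<Rightarrow> 'a mat" where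
  "mat_list_prod n As = foldr (\<lambda>A B. A * B) As (1\<^sub>m n)"

definition nonzero_rows :: "'a::field mat \<Rightarrow> nat" where
  "nonzero_rows A = card {i. i < dim_row A \<and> row A i \<noteq> 0\<^sub>v (dim_col A)}"

end

theory Submission
  imports Defs
begin

definition step :: "('g, 'b) monoid_scheme \<Rightarrow> nat \<Rightarrow> (nat \<Rightarrow> 'g) \<Rightarrow> nat \<Rightarrow> 'g \<Rightarrow> nat option" where
  "step G n g i h = (if \<exists>q<n. inv\<^bsub>G\<^esub> (g i) \<otimes>\<^bsub>G\<^esub> g q = h
     then Some (THE q. q < n \<and> inv\<^bsub>G\<^esub> (g i) \<otimes>\<^bsub>G\<^esub> g q = h) else None)"

fun reach :: "('g, 'b) monoid_scheme \<Rightarrow> nat \<Rightarrow> (nat \<Rightarrow> 'g) \<Rightarrow> nat \<Rightarrow> 'g list \<Rightarrow> nat option" where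
  "reach G n g i [] = Some i"
| "reach G n g i (h # hs) = Option.bind (step G n g i h) (\<lambda>q. reach G n g q hs)"

locale setting = group G for G :: "('g, 'b) monoid_scheme" +
  fixes n :: nat and g :: "nat \<Rightarrow> 'g"
  assumes gc: "\<And>i. i < n \<Longrightarrow> g i \<in> carrier G"
    and ginj: "inj_on g {..<n}"
begin

lemma uniq: assumes "i < n" "q < n" "q' < n"
  "inv\<^bsub>G\<^esub> (g i) \<otimes>\<^bsub>G\<^esub> g q = inv\<^bsub>G\<^esub> (g i) \<otimes>\<^bsub>G\<^esub> g q'"
  shows "q = q'"
proof -
  have "g q = g q'" using assms gc by simp
  thus ?thesis using ginj assms by (auto dest: inj_onD)
qed

lemma uniq2: assumes "i < n" "i' < n" "q < n"
  "inv\<^bsub>G\<^esub> (g i) \<otimes>\<^bsub>G\<^esub> g q = inv\<^bsub>G\<^esub> (g i') \<otimes>\<^bsub>G\<^esub> g q"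
  shows "i = i'"
proof -
  have "inv\<^bsub>G\<^esub> (g i) = inv\<^bsub>G\<^esub> (g i')" using assms gc by simp
  hence "g i = g i'" using assms gc inv_inj by (auto dest: inj_onD)
  thus ?thesis using ginj assms by (auto dest: inj_onD)
qed

lemma step_Some: assumes "i < n" "q < n" "inv\<^bsub>G\<^esub> (g i) \<otimes>\<^bsub>G\<^esub> g q = h"
  shows "step G n g i h = Some q"
proof -
  have "(THE q. q < n \<and> inv\<^bsub>G\<^esub> (g i) \<otimes>\<^bsub>G\<^esub> g q = h) = q"
    using assms uniq by (intro the_equality) auto
  thus ?thesis using assms unfolding step_def by auto
qed

lemma step_SomeD: assumes "i < n" "step G n g i h = Some q"
  shows "q < n \<and> inv\<^bsub>G\<^esub> (g i) \<otimes>\<^bsub>G\<^esub> g q = h"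
proof -
  obtain q0 where q0: "q0 < n" "inv\<^bsub>G\<^esub> (g i) \<otimes>\<^bsub>G\<^esub> g q0 = h"
    using assms(2) unfolding step_def by (auto split: if_splits)
  thus ?thesis using step_Some[OF assms(1) q0] assms by simp
qed

lemma step_None: assumes "step G n g i h = None" "q < n"
  shows "inv\<^bsub>G\<^esub> (g i) \<otimes>\<^bsub>G\<^esub> g q \<noteq> h"
  using assms unfolding step_def by (auto split: if_splits)


lemma reach_lt: "i < n \<Longrightarrow> reach G n g i hs = Some j \<Longrightarrow> j < n"
proof (induction hs arbitrary: i)
  case Nil then show ?case by simp
next
  case (Cons h hs)
  then obtain q where q: "step G n g i h = Some q" "reach G n g q hs = Some j" by (auto split: Option.bind_splits)
  then show ?case using Cons step_SomeD by blast
qed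

lemma foldr_closed: "set hs \<subseteq> carrier G \<Longrightarrow> foldr (\<lambda>x y. x \<otimes>\<^bsub>G\<^esub> y) hs \<one>\<^bsub>G\<^esub> \<in> carrier G"
  by (induction hs) auto

lemma reach_prod: "i < n \<Longrightarrow> set hs \<subseteq> carrier G \<Longrightarrow> reach G n g i hs = Some j
   \<Longrightarrow> g j = g i \<otimes>\<^bsub>G\<^esub> foldr (\<lambda>x y. x \<otimes>\<^bsub>G\<^esub> y) hs \<one>\<^bsub>G\<^esub>"
proof (induction hs arbitrary: i)
  case Nil then show ?case using gc by simp
next
  case (Cons h hs)
  then obtain q where q: "step G n g i h = Some q" "reach G n g q hs = Some j" by (auto split: Option.bind_splits)
  from step_SomeD[OF Cons(2) q(1)] have q1: "q < n" "inv\<^bsub>G\<^esub> (g i) \<otimes>\<^bsub>G\<^esub> g q = h" by auto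
  have hc: "h \<in> carrier G" using q1 gc Cons(2) by (metis inv_closed m_closed)
  have gq: "g q = g i \<otimes>\<^bsub>G\<^esub> h"
    using inv_solve_left'[OF hc gc[OF Cons(2)] gc[OF q1(1)]] q1(2) by simp
  have fc: "foldr (\<lambda>x y. x \<otimes>\<^bsub>G\<^esub> y) hs \<one>\<^bsub>G\<^esub> \<in> carrier G"
    using Cons(3) foldr_closed by simp
  have "g j = g q \<otimes>\<^bsub>G\<^esub> foldr (\<lambda>x y. x \<otimes>\<^bsub>G\<^esub> y) hs \<one>\<^bsub>G\<^esub>" using Cons q q1 by auto
  also have "\<dots> = g i \<otimes>\<^bsub>G\<^esub> (h \<otimes>\<^bsub>G\<^esub> foldr (\<lambda>x y. x \<otimes>\<^bsub>G\<^esub> y) hs \<one>\<^bsub>G\<^esub>)"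
    using gq gc Cons fc by (simp add: m_assoc)
  finally show ?case by simp
qed

lemma dims: "dim_row (mat_list_prod n (map (grade_mat G n g) hs) :: 'a::field mat) = n \<and>
   dim_col (mat_list_prod n (map (grade_mat G n g) hs) :: 'a::field mat) = n"
  unfolding mat_list_prod_def by (induction hs) (auto simp: grade_mat_def)

lemma entry: "i < n \<Longrightarrow> j < n \<Longrightarrow>
  (mat_list_prod n (map (grade_mat G n g) hs) :: 'a::field mat) $$ (i, j)
   = (if reach G n g i hs = Some j then 1 else 0)"
proof (induction hs arbitrary: i)
  case Nil then show ?case by (simp add: mat_list_prod_def)
next
  case (Cons h hs)
  define Q where "Q = (mat_list_prod n (map (grade_mat G n g) hs) :: 'a mat)"
  have eq: "mat_list_prod n (map (grade_mat G n g) (h # hs)) = grade_mat G n g h * Q"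
    unfolding Q_def mat_list_prod_def by simp
  have dQ: "dim_row Q = n" "dim_col Q = n" using dims Q_def by auto
  have "(grade_mat G n g h * Q) $$ (i, j) = (\<Sum>q\<in>{0..<n}. (if inv\<^bsub>G\<^esub> (g i) \<otimes>\<^bsub>G\<^esub> g q = h then 1 else 0) * Q $$ (q, j))"
    using Cons(2,3) dQ by (simp add: grade_mat_def scalar_prod_def)
  also have "\<dots> = (if reach G n g i (h # hs) = Some j then 1 else 0)"
  proof (cases "step G n g i h")
    case None
    then show ?thesis using step_None by simp
  next
    case (Some q0)
    from step_SomeD[OF Cons(2) this] have q0: "q0 < n" "inv\<^bsub>G\<^esub> (g i) \<otimes>\<^bsub>G\<^esub> g q0 = h" by auto
    have "(\<Sum>q\<in>{0..<n}. (if inv\<^bsub>G\<^esub> (g i) \<otimes>\<^bsub>G\<^esub> g q = h then 1 else 0) * Q $$ (q, j))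
        = (\<Sum>q\<in>{0..<n}. if q = q0 then Q $$ (q0, j) else 0)"
      using q0 uniq[OF Cons(2)] by (intro sum.cong) auto
    also have "\<dots> = Q $$ (q0, j)" using q0 by simp
    also have "\<dots> = (if reach G n g q0 hs = Some j then 1 else 0)"
      using Cons.IH[OF q0(1) Cons(3)] Q_def by simp
    finally show ?thesis using Some by simp
  qed
  finally show ?case using eq by simp
qed

lemma row_nz: "i < n \<Longrightarrow>
   (row (mat_list_prod n (map (grade_mat G n g) hs) :: 'a::field mat) i \<noteq> 0\<^sub>v n)
   = (reach G n g i hs \<noteq> None)"
proof -
  assume i: "i < n"
  let ?A = "(mat_list_prod n (map (grade_mat G n g) hs) :: 'a::field mat)"
  have "row ?A i \<noteq> 0\<^sub>v n \<longleftrightarrow> (\<exists>j<n. ?A $$ (i, j) \<noteq> 0)"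
    using dims[of hs] i by (auto simp: vec_eq_iff row_def)
  also have "\<dots> \<longleftrightarrow> reach G n g i hs \<noteq> None"
  proof
    assume "\<exists>j<n. ?A $$ (i, j) \<noteq> 0"
    then obtain j where "j < n" "?A $$ (i, j) \<noteq> 0" by blast
    then show "reach G n g i hs \<noteq> None" using entry[OF i, of j hs, where 'a='a] by (simp split: if_splits)
  next
    assume "reach G n g i hs \<noteq> None"
    then obtain j where j: "reach G n g i hs = Some j" by blast
    then have "j < n" using reach_lt[OF i] by blast
    then show "\<exists>j<n. ?A $$ (i, j) \<noteq> 0" using entry[OF i, of j hs, where 'a='a] j by auto
  qed
  finally show ?thesis .
qed

lemma nzr: "nonzero_rows (mat_list_prod n (map (grade_mat G n g) hs) :: 'a::field mat)
   = card {i. i < n \<and> reach G n g i hs \<noteq> None}"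
  unfolding nonzero_rows_def using dims[of hs, where 'a='a] row_nz[of _ hs, where 'a='a]
  by (intro arg_cong[where f=card]) auto


lemma main:
  fixes h1 :: 'g and hs :: "'g list"
  assumes h1c: "h1 \<in> carrier G" and hsc: "set hs \<subseteq> carrier G"
    and prod1: "h1 \<otimes>\<^bsub>G\<^esub> foldr (\<lambda>x y. x \<otimes>\<^bsub>G\<^esub> y) hs \<one>\<^bsub>G\<^esub> = \<one>\<^bsub>G\<^esub>"
  shows "card {i. i < n \<and> reach G n g i (h1 # hs) \<noteq> None} = card {i. i < n \<and> reach G n g i hs \<noteq> None}"
proof -
  define P where "P = foldr (\<lambda>x y. x \<otimes>\<^bsub>G\<^esub> y) hs \<one>\<^bsub>G\<^esub>"
  have Pc: "P \<in> carrier G" unfolding P_def using foldr_closed hsc by blast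
  have Ph: "P \<otimes>\<^bsub>G\<^esub> h1 = \<one>\<^bsub>G\<^esub>" using inv_comm[OF prod1[folded P_def] h1c Pc] .
  define f where "f i = the (step G n g i h1)" for i
  let ?S1 = "{i. i < n \<and> reach G n g i (h1 # hs) \<noteq> None}"
  let ?S2 = "{i. i < n \<and> reach G n g i hs \<noteq> None}"
  have "bij_betw f ?S1 ?S2"
  proof (rule bij_betw_imageI)
    show "inj_on f ?S1"
    proof (rule inj_onI)
      fix i i' assume a: "i \<in> ?S1" "i' \<in> ?S1" "f i = f i'"
      obtain q where q: "step G n g i h1 = Some q" using a(1) by (auto split: Option.bind_splits)
      obtain q' where q': "step G n g i' h1 = Some q'" using a(2) by (auto split: Option.bind_splits)
      have "q = q'" using a(3) q q' f_def by simp
      then show "i = i'" using step_SomeD[OF _ q] step_SomeD[OF _ q'] a uniq2 by auto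
    qed
  next
    show "f ` ?S1 = ?S2"
    proof
      show "f ` ?S1 \<subseteq> ?S2"
      proof
        fix x assume "x \<in> f ` ?S1"
        then obtain i where i: "i \<in> ?S1" "x = f i" by blast
        obtain q where q: "step G n g i h1 = Some q" using i(1) by (auto split: Option.bind_splits)
        have "q < n" using step_SomeD[OF _ q] i by auto
        moreover have "reach G n g q hs \<noteq> None" using i q by auto
        ultimately show "x \<in> ?S2" using i q f_def by simp
      qed
    next
      show "?S2 \<subseteq> f ` ?S1"
      proof
        fix q assume q: "q \<in> ?S2"
        then obtain r where r: "reach G n g q hs = Some r" by auto
        have rn: "r < n" using reach_lt q r by auto
        have gr: "g r = g q \<otimes>\<^bsub>G\<^esub> P" using reach_prod[OF _ hsc r] q P_def by auto
        have "g r \<otimes>\<^bsub>G\<^esub> h1 = g q \<otimes>\<^bsub>G\<^esub> (P \<otimes>\<^bsub>G\<^esub> h1)"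
          using gr gc q Pc h1c by (simp add: m_assoc)
        also have "\<dots> = g q" using Ph gc q by simp
        finally have "inv\<^bsub>G\<^esub> (g r) \<otimes>\<^bsub>G\<^esub> g q = h1"
          using inv_solve_left'[OF h1c gc[OF rn] gc, of q] q by auto
        then have st: "step G n g r h1 = Some q" using step_Some rn q by auto
        then have "r \<in> ?S1" using rn q r by auto
        moreover have "f r = q" using st f_def by simp
        ultimately show "q \<in> f ` ?S1" by blast
      qed
    qed
  qed
  then show ?thesis by (rule bij_betw_same_card)
qed

end

lemma supp_carrier: "group G \<Longrightarrow> (\<And>i. i < n \<Longrightarrow> g i \<in> carrier G) \<Longrightarrow> elem_supp G n g \<subseteq> carrier G"
  unfolding elem_supp_def by (auto intro: group.inv_closed monoid.m_closed group.is_monoid)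

theorem mainTheorem2:
  fixes G :: "('g, 'b) monoid_scheme" and n :: nat and g :: "nat \<Rightarrow> 'g"
    and h1 :: 'g and hs :: "'g list"
  assumes "group G"
    and "\<And>i. i < n \<Longrightarrow> g i \<in> carrier G"
    and "inj_on g {..<n}"
    and "h1 \<in> elem_supp G n g"
    and "set hs \<subseteq> elem_supp G n g"
    and "foldr (\<lambda>x y. x \<otimes>\<^bsub>G\<^esub> y) (h1 # hs) \<one>\<^bsub>G\<^esub> = \<one>\<^bsub>G\<^esub>"
  shows "nonzero_rows (mat_list_prod n (map (grade_mat G n g) (h1 # hs)) :: 'a::field_char_0 mat)
       = nonzero_rows (mat_list_prod n (map (grade_mat G n g) hs) :: 'a mat)"
proof -
  interpret setting G n g
    using assms(1-3) by (intro setting.intro setting_axioms.intro) auto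
  have sc: "elem_supp G n g \<subseteq> carrier G" using supp_carrier assms(1,2) by blast
  show ?thesis
    unfolding nzr
    by (rule main) (use assms sc in auto)
qed

end
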